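(* Let $\Sigma=(\sigma_0,\sigma_\infty,\sigma_1,\tau)$ be a special admissible 4-tuple in $S_{2n}^4$ such that $\sigma_1\tau$ contains the 4-cycle $(2n-h,h,k_1,k_2)$ with $h<k_1<k_2<2n-h$. If $n$ is even, $k_1=n-h$ and $k_2=n+h$, then the conjugacy class of $\Sigma$ contains exactly two special admissible 4-tuples; otherwise it contains exactly four.
   Context: Permutation products are read left to right. An admissible 4-tuple is $(\sigma_0,\sigma_\infty,\sigma_1,\tau)\in S_{2n}^4$ with $\sigma_0$ a product of $n$ disjoint transpositions, $\sigma_\infty$ a $2n$-cycle, $\sigma_1$ a product of $n-2$ disjoint transpositions, $\tau$ a transposition, and $\sigma_0\sigma_\infty\sigma_1\tau=\mathrm{id}$. It is special if $\sigma_\infty=(2n,2n-1,\dots,1)$ and $\sigma_1(2n)=\tau(2n)=2n$. Conjugacy means simultaneous conjugation by some $\gamma\in S_{2n}$. *)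

theory Defs
  imports "HOL-Combinatorics.Combinatorics"
begin

text \<open>Permutations of {1..2n} are functions nat => nat permuting {1..2*n}.
  Products are read left to right: the product p q means "first p, then q",
  i.e. the function q o p.\<close>

type_synonym tuple4 = "(nat \<Rightarrow> nat) \<times> (nat \<Rightarrow> nat) \<times> (nat \<Rightarrow> nat) \<times> (nat \<Rightarrow> nat)"

definition prod_disj_transp :: "nat \<Rightarrow> nat \<Rightarrow> (nat \<Rightarrow> nat) \<Rightarrow> bool" where
  "prod_disj_transp n k \<sigma> \<longleftrightarrow> \<sigma> permutes {1..2*n} \<and> \<sigma> \<circ> \<sigma> = id
     \<and> card {x \<in> {1..2*n}. \<sigma> x \<noteq> x} = 2 * k"

definition full_cycle :: "nat \<Rightarrow> (nat \<Rightarrow> nat) \<Rightarrow> bool" where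
  "full_cycle n \<sigma> \<longleftrightarrow> (\<exists>xs. distinct xs \<and> set xs = {1..2*n} \<and> \<sigma> = cycle_of_list xs)"

definition is_transp :: "nat \<Rightarrow> (nat \<Rightarrow> nat) \<Rightarrow> bool" where
  "is_transp n \<tau> \<longleftrightarrow> (\<exists>a\<in>{1..2*n}. \<exists>b\<in>{1..2*n}. a \<noteq> b \<and> \<tau> = transpose a b)"

definition admissible :: "nat \<Rightarrow> tuple4 \<Rightarrow> bool" where
  "admissible n \<Sigma> \<longleftrightarrow> (case \<Sigma> of (s0, sinf, s1, t) \<Rightarrow>
     prod_disj_transp n n s0 \<and> full_cycle n sinf \<and> prod_disj_transp n (n - 2) s1
     \<and> is_transp n t \<and> t \<circ> s1 \<circ> sinf \<circ> s0 = id)"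

definition std_cycle :: "nat \<Rightarrow> nat \<Rightarrow> nat" where
  "std_cycle n x = (if x = 1 then 2*n else if 2 \<le> x \<and> x \<le> 2*n then x - 1 else x)"

definition special :: "nat \<Rightarrow> tuple4 \<Rightarrow> bool" where
  "special n \<Sigma> \<longleftrightarrow> admissible n \<Sigma> \<and> (case \<Sigma> of (s0, sinf, s1, t) \<Rightarrow>
     sinf = std_cycle n \<and> s1 (2*n) = 2*n \<and> t (2*n) = 2*n)"

definition conj4 :: "(nat \<Rightarrow> nat) \<Rightarrow> tuple4 \<Rightarrow> tuple4" where
  "conj4 \<gamma> \<Sigma> = (case \<Sigma> of (s0, sinf, s1, t) \<Rightarrow>
     (inv \<gamma> \<circ> s0 \<circ> \<gamma>, inv \<gamma> \<circ> sinf \<circ> \<gamma>, inv \<gamma> \<circ> s1 \<circ> \<gamma>, inv \<gamma> \<circ> t \<circ> \<gamma>))"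

definition conj_class :: "nat \<Rightarrow> tuple4 \<Rightarrow> tuple4 set" where
  "conj_class n \<Sigma> = {conj4 \<gamma> \<Sigma> | \<gamma>. \<gamma> permutes {1..2*n}}"

end

theory Submission
  imports Defs
begin


definition rot :: "nat \<Rightarrow> nat \<Rightarrow> nat \<Rightarrow> nat" where
  "rot n j x = (if x \<in> {1..2*n} then (x - 1 + j) mod (2*n) + 1 else x)"

lemma mod2n_le: "x \<in> {1..2*n} \<Longrightarrow> Suc (a mod (2*n)) \<le> 2*n"
  by (simp add: Suc_leI)

lemma rot_in: "x \<in> {1..2*n} \<Longrightarrow> rot n j x \<in> {1..2*n}"
  unfolding rot_def using mod2n_le by auto

lemma rot_out: "x \<notin> {1..2*n} \<Longrightarrow> rot n j x = x"
  unfolding rot_def by auto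

lemma rot_add: "rot n i (rot n j x) = rot n (i+j) x"
proof (cases "x \<in> {1..2*n}")
  case True
  then have "n > 0" by auto
  have "(x - 1 + j) mod (2 * n) + 1 \<in> {1..2*n}" using True mod2n_le by auto
  moreover have "((x - 1 + j) mod (2 * n) + 1 - 1 + i) mod (2*n) = (x - 1 + (i+j)) mod (2*n)"
  proof -
    have "(x - 1 + j) mod (2 * n) + 1 - 1 + i = i + (x - 1 + j) mod (2*n)" by simp
    then have "((x - 1 + j) mod (2 * n) + 1 - 1 + i) mod (2*n) = (i + (x - 1 + j)) mod (2*n)"
      by (simp only: mod_add_right_eq)
    then show ?thesis by (simp add: ac_simps)
  qed
  ultimately show ?thesis using True unfolding rot_def by simp
qed (simp add: rot_out)

lemma rot_mod: "rot n (j mod (2*n)) = rot n j"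
proof
  fix x show "rot n (j mod (2*n)) x = rot n j x"
  proof (cases "x \<in> {1..2*n}")
    case True
    have "(x - 1 + j mod (2*n)) mod (2*n) = (x - 1 + j) mod (2*n)"
      by (simp add: mod_add_right_eq)
    then show ?thesis unfolding rot_def by (simp only: True if_True)
  qed (simp add: rot_out)
qed

lemma rot_0: "rot n 0 = id"
  unfolding rot_def by (auto simp: fun_eq_iff)

lemma rot_2n: "rot n (2*n) = id"
  by (metis rot_0 rot_mod mod_self)

lemma rot_comp: "rot n i \<circ> rot n j = rot n (i+j)"
  by (simp add: fun_eq_iff rot_add)

lemma rot_comm: "rot n i \<circ> rot n j = rot n j \<circ> rot n i"
  by (simp add: rot_comp add.commute)

lemma rot_n0: "rot 0 j = id"
  unfolding rot_def by (auto simp: fun_eq_iff)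

lemma rot_permutes: "rot n j permutes {1..2*n}"
proof (cases "n = 0")
  case True then show ?thesis by (simp add: rot_n0 permutes_id)
next
  case False
  define j' where "j' = j mod (2*n)"
  have r: "rot n j = rot n j'" unfolding j'_def by (simp add: rot_mod)
  have "j' \<le> 2*n"
    using False unfolding j'_def by (simp add: less_imp_le_nat)
  then have e: "2*n - j' + j' = 2*n" "j' + (2*n - j') = 2*n" by auto
  have "rot n (2*n - j') \<circ> rot n j' = id" "rot n j' \<circ> rot n (2*n - j') = id"
    by (simp_all only: rot_comp e rot_2n)
  then have "bij (rot n j')" using o_bij by blast
  then show ?thesis unfolding r permutes_def by (simp add: rot_out) (metis bij_pointE)
qed

lemma rot_inv: "j \<le> 2*n \<Longrightarrow> inv (rot n j) = rot n (2*n - j)"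
proof -
  assume "j \<le> 2*n"
  then have e: "2*n - j + j = 2*n" "j + (2*n - j) = 2*n" by auto
  have "rot n (2*n - j) \<circ> rot n j = id" "rot n j \<circ> rot n (2*n - j) = id"
    by (simp_all only: rot_comp e rot_2n)
  then show ?thesis by (rule inv_unique_comp[rotated])
qed

lemma std_rot: assumes "n > 0" shows "std_cycle n = rot n (2*n - 1)"
proof
  fix x
  show "std_cycle n x = rot n (2*n-1) x"
  proof (cases "x \<in> {1..2*n} \<and> x \<noteq> 1")
    case True
    then have "(x - 1 + (2 * n - 1)) = (x-2) + 1*(2*n)" by auto
    then have "(x - 1 + (2 * n - 1)) mod (2*n) = (x - 2) mod (2*n)" by simp
    also have "\<dots> = x - 2"
    proof -
      have "x - 2 < 2*n" using True by auto
      then show ?thesis by simp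
    qed
    finally have "(x - 1 + (2 * n - 1)) mod (2*n) = x - 2" .
    then show ?thesis using True unfolding std_cycle_def rot_def by auto
  next
    case False
    then show ?thesis using assms unfolding std_cycle_def rot_def by auto
  qed
qed



lemma conj_perm: "\<gamma> permutes D \<Longrightarrow> \<sigma> permutes D \<Longrightarrow> inv \<gamma> \<circ> \<sigma> \<circ> \<gamma> permutes D"
  by (simp add: permutes_compose permutes_inv)

lemma conj_apply: "\<gamma> permutes D \<Longrightarrow> (inv \<gamma> \<circ> \<sigma> \<circ> \<gamma>) x = y \<longleftrightarrow> \<sigma> (\<gamma> x) = \<gamma> y"
  by (auto simp: permutes_inv_eq)

lemma conj_card:
  assumes g: "\<gamma> permutes D"
  shows "card {x\<in>D. (inv \<gamma> \<circ> \<sigma> \<circ> \<gamma>) x \<noteq> x} = card {x\<in>D. \<sigma> x \<noteq> x}"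
proof -
  have "\<gamma> ` {x\<in>D. (inv \<gamma> \<circ> \<sigma> \<circ> \<gamma>) x \<noteq> x} = {x\<in>D. \<sigma> x \<noteq> x}"
  proof
    show "\<gamma> ` {x\<in>D. (inv \<gamma> \<circ> \<sigma> \<circ> \<gamma>) x \<noteq> x} \<subseteq> {x\<in>D. \<sigma> x \<noteq> x}"
      using g by (auto simp: conj_apply[OF g] permutes_in_image permutes_inverses[OF g])
    show "{x\<in>D. \<sigma> x \<noteq> x} \<subseteq> \<gamma> ` {x\<in>D. (inv \<gamma> \<circ> \<sigma> \<circ> \<gamma>) x \<noteq> x}"
    proof
      fix y assume y: "y \<in> {x\<in>D. \<sigma> x \<noteq> x}"
      have "y = \<gamma> (inv \<gamma> y)" using g by (simp add: permutes_inverses)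
      moreover have "inv \<gamma> y \<in> D" using y g by (simp add: permutes_in_image[OF permutes_inv[OF g]])
      moreover have "(inv \<gamma> \<circ> \<sigma> \<circ> \<gamma>) (inv \<gamma> y) \<noteq> inv \<gamma> y"
      proof -
        have "(inv \<gamma> \<circ> \<sigma> \<circ> \<gamma>) (inv \<gamma> y) = inv \<gamma> y \<longleftrightarrow> \<sigma> (\<gamma> (inv \<gamma> y)) = \<gamma> (inv \<gamma> y)"
          by (rule conj_apply[OF g])
        then show ?thesis using y by (simp add: permutes_inverses[OF g])
      qed
      ultimately show "y \<in> \<gamma> ` {x\<in>D. (inv \<gamma> \<circ> \<sigma> \<circ> \<gamma>) x \<noteq> x}" by blast
    qed
  qed
  moreover have "inj_on \<gamma> {x\<in>D. (inv \<gamma> \<circ> \<sigma> \<circ> \<gamma>) x \<noteq> x}"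
    using g permutes_inj inj_on_subset by blast
  then have "card (\<gamma> ` {x\<in>D. (inv \<gamma> \<circ> \<sigma> \<circ> \<gamma>) x \<noteq> x}) = card {x\<in>D. (inv \<gamma> \<circ> \<sigma> \<circ> \<gamma>) x \<noteq> x}"
    by (rule card_image)
  ultimately show ?thesis by simp
qed

lemma conj_invol:
  assumes g: "\<gamma> permutes D" and s: "\<sigma> \<circ> \<sigma> = id"
  shows "(inv \<gamma> \<circ> \<sigma> \<circ> \<gamma>) \<circ> (inv \<gamma> \<circ> \<sigma> \<circ> \<gamma>) = id"
proof -
  have "\<And>y. \<sigma> (\<sigma> y) = y" using s by (metis comp_apply id_apply)
  then show ?thesis using g by (simp add: fun_eq_iff permutes_inverses)
qed

lemma pdt_conj:
  assumes g: "\<gamma> permutes {1..2*n}" and p: "prod_disj_transp n k \<sigma>"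
  shows "prod_disj_transp n k (inv \<gamma> \<circ> \<sigma> \<circ> \<gamma>)"
proof -
  have "\<sigma> permutes {1..2*n}" "\<sigma> \<circ> \<sigma> = id" "card {x \<in> {1..2*n}. \<sigma> x \<noteq> x} = 2 * k"
    using p unfolding prod_disj_transp_def by simp_all
  then show ?thesis unfolding prod_disj_transp_def
    using conj_perm[OF g] conj_invol[OF g] conj_card[OF g] by simp
qed

lemma transp_conj:
  assumes g: "\<gamma> permutes {1..2*n}" and p: "is_transp n \<tau>"
  shows "is_transp n (inv \<gamma> \<circ> \<tau> \<circ> \<gamma>)"
proof -
  obtain a b where ab: "a \<in> {1..2*n}" "b \<in> {1..2*n}" "a \<noteq> b" "\<tau> = transpose a b"
    using p unfolding is_transp_def by blast
  have "inv \<gamma> \<circ> \<tau> \<circ> \<gamma> = transpose (inv \<gamma> a) (inv \<gamma> b)"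
    using g ab(4) by (auto simp: fun_eq_iff transpose_def permutes_inverses permutes_inv_eq)
  moreover have "inv \<gamma> a \<in> {1..2*n}" "inv \<gamma> b \<in> {1..2*n}" "inv \<gamma> a \<noteq> inv \<gamma> b"
    using ab g permutes_in_image[OF permutes_inv[OF g]] 
    by (auto simp: permutes_inv_eq[OF g] permutes_inverses[OF g])
  ultimately show ?thesis unfolding is_transp_def by blast
qed

lemma conj_comm:
  assumes g: "\<gamma> permutes D" and c: "\<gamma> \<circ> \<sigma> = \<sigma> \<circ> \<gamma>"
  shows "inv \<gamma> \<circ> \<sigma> \<circ> \<gamma> = \<sigma>"
proof
  fix x
  have "\<sigma> (\<gamma> x) = \<gamma> (\<sigma> x)" using c by (metis comp_apply)
  then show "(inv \<gamma> \<circ> \<sigma> \<circ> \<gamma>) x = \<sigma> x" by (simp add: permutes_inverses[OF g])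
qed

lemma rot_top: "c \<in> {1..2*n} \<Longrightarrow> rot n c (2*n) = c"
proof -
  assume c: "c \<in> {1..2*n}"
  have e: "2*n - 1 + c = (c - 1) + 2*n" using c by auto
  have "(c - 1 + 2*n) mod (2*n) = (c-1) mod (2*n)" by (rule mod_add_self2)
  also have "\<dots> = c - 1" using c by (intro mod_less) auto
  finally have "(2*n - 1 + c) mod (2*n) = c - 1" by (simp only: e)
  then show ?thesis using c unfolding rot_def by auto
qed

lemma special_conj_rot:
  assumes sp: "special n (s0, sinf, s1, t)" and c: "c \<in> {1..2*n}" "s1 c = c" "t c = c"
  shows "special n (conj4 (rot n c) (s0, sinf, s1, t))"
proof -
  let ?g = "rot n c"
  have g: "?g permutes {1..2*n}" by (rule rot_permutes)
  have n: "n > 0" using c by auto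
  have si: "sinf = rot n (2*n-1)" using sp n std_rot unfolding special_def by auto
  have ad: "admissible n (s0, sinf, s1, t)" using sp unfolding special_def by auto
  have "inv ?g \<circ> sinf \<circ> ?g = sinf" by (rule conj_comm[OF g]) (simp only: si rot_comm)
  moreover have "(inv ?g \<circ> t \<circ> ?g) \<circ> (inv ?g \<circ> s1 \<circ> ?g) \<circ> (inv ?g \<circ> sinf \<circ> ?g) \<circ> (inv ?g \<circ> s0 \<circ> ?g) = id"
  proof -
    have "\<And>y. t (s1 (sinf (s0 y))) = y" using ad unfolding admissible_def
      by (auto simp: fun_eq_iff)
    then show ?thesis using g by (simp add: fun_eq_iff permutes_inverses)
  qed
  moreover have "(inv ?g \<circ> s1 \<circ> ?g) (2*n) = 2*n" "(inv ?g \<circ> t \<circ> ?g) (2*n) = 2*n"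
    using c rot_top[OF c(1)] by (auto simp: permutes_inv_eq[OF g])
  moreover have eq: "conj4 ?g (s0,sinf,s1,t) = (inv ?g\<circ>s0\<circ>?g, inv ?g\<circ>sinf\<circ>?g, inv ?g\<circ>s1\<circ>?g, inv ?g\<circ>t\<circ>?g)"
    unfolding conj4_def by simp
  moreover have "prod_disj_transp n n s0" "full_cycle n sinf" "prod_disj_transp n (n - 2) s1" "is_transp n t"
    using ad unfolding admissible_def by simp_all
  moreover have "sinf = std_cycle n" using sp unfolding special_def by simp
  ultimately show ?thesis using pdt_conj[OF g] transp_conj[OF g]
    unfolding special_def admissible_def prod.case by simp
qed

lemma comm_std_rot:
  assumes g: "\<gamma> permutes {1..2*n}" and n: "n > 0"
    and c: "\<gamma> \<circ> std_cycle n = std_cycle n \<circ> \<gamma>"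
  shows "\<gamma> = rot n (\<gamma> (2*n))"
proof -
  let ?c = "\<gamma> (2*n)"
  have "2*n \<in> {1..2*n}" using n by auto
  then have cin: "?c \<in> {1..2*n}" using permutes_in_image[OF g] by blast
  have st: "std_cycle n = rot n (2*n-1)" using std_rot[OF n] .
  have cc: "\<And>y. \<gamma> (std_cycle n y) = std_cycle n (\<gamma> y)" using c by (metis comp_apply)
  have rc: "\<And>y. rot n ?c (std_cycle n y) = std_cycle n (rot n ?c y)"
    unfolding st by (simp add: rot_add add.commute)
  have main: "\<And>k. k < 2*n \<Longrightarrow> \<gamma> (2*n - k) = rot n ?c (2*n - k)"
  proof -
    fix k show "k < 2*n \<Longrightarrow> \<gamma> (2*n - k) = rot n ?c (2*n - k)"
    proof (induction k)
      case 0 then show ?case using rot_top[OF cin] by simp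
    next
      case (Suc k)
      have e: "2*n - Suc k = std_cycle n (2*n - k)" using Suc.prems unfolding std_cycle_def by auto
      have ih: "\<gamma> (2*n - k) = rot n ?c (2*n - k)" using Suc by simp
      have "\<gamma> (2*n - Suc k) = \<gamma> (std_cycle n (2*n - k))" by (simp only: e)
      also have "\<dots> = std_cycle n (\<gamma> (2*n - k))" by (rule cc)
      also have "\<dots> = std_cycle n (rot n ?c (2*n - k))" by (simp only: ih)
      also have "\<dots> = rot n ?c (std_cycle n (2*n - k))" by (rule rc[symmetric])
      also have "\<dots> = rot n ?c (2*n - Suc k)" by (simp only: e)
      finally show ?case .
    qed
  qed
  show ?thesis
  proof
    fix x show "\<gamma> x = rot n ?c x"
    proof (cases "x \<in> {1..2*n}")
      case True
      then have e: "2*n - (2*n - x) = x" "2*n - x < 2*n" by auto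
      have "\<gamma> (2*n - (2*n - x)) = rot n ?c (2*n - (2*n - x))" by (rule main) (rule e(2))
      then show ?thesis by (simp only: e(1))
    next
      case False
      then show ?thesis using g rot_out by (simp add: permutes_not_in)
    qed
  qed
qed



lemma fc_step:
  fixes s1 :: "nat \<Rightarrow> nat"
  assumes inv: "\<And>x. s1 (s1 x) = x"
    and h1: "s1 x = transpose a b y" and h2: "s1 y = transpose a b z"
    and y: "y \<noteq> a" "y \<noteq> b" and xz: "x \<noteq> z"
  shows "(a = x \<and> b = z) \<or> (a = z \<and> b = x)"
proof -
  have "s1 x = y" using h1 y by simp
  then have "s1 y = x" using inv by metis
  then have tz: "transpose a b z = x" using h2 by simp
  show ?thesis
  proof (cases "z = a")
    case True then show ?thesis using tz by simp
  next
    case False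
    show ?thesis
    proof (cases "z = b")
      case True then show ?thesis using tz by simp
    next
      case False
      then have "transpose a b z = z" using \<open>z \<noteq> a\<close> by simp
      then show ?thesis using tz xz by simp
    qed
  qed
qed

lemma four_cycle:
  fixes s1 :: "nat \<Rightarrow> nat"
  assumes inv: "\<And>x. s1 (s1 x) = x" and ab: "a \<noteq> b"
    and d: "distinct [p0,p1,p2,p3]"
    and c0: "transpose a b (s1 p0) = p1" and c1: "transpose a b (s1 p1) = p2"
    and c2: "transpose a b (s1 p2) = p3" and c3: "transpose a b (s1 p3) = p0"
  shows "(a = p0 \<and> b = p2) \<or> (a = p2 \<and> b = p0) \<or> (a = p1 \<and> b = p3) \<or> (a = p3 \<and> b = p1)"
proof -
  have i0: "s1 p0 = transpose a b p1" using c0 by (metis transpose_involutory)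
  have i1: "s1 p1 = transpose a b p2" using c1 by (metis transpose_involutory)
  have i2: "s1 p2 = transpose a b p3" using c2 by (metis transpose_involutory)
  have i3: "s1 p3 = transpose a b p0" using c3 by (metis transpose_involutory)
  have "\<not> (p1 \<in> {a,b} \<and> p2 \<in> {a,b} \<and> p3 \<in> {a,b})" using d by auto
  then consider "p1 \<notin> {a,b}" | "p2 \<notin> {a,b}" | "p3 \<notin> {a,b}" by blast
  then show ?thesis
  proof cases
    case 1
    then have "(a = p0 \<and> b = p2) \<or> (a = p2 \<and> b = p0)"
      using fc_step[OF inv i0 i1] d by auto
    then show ?thesis by blast
  next
    case 2
    then have "(a = p1 \<and> b = p3) \<or> (a = p3 \<and> b = p1)"
      using fc_step[OF inv i1 i2] d by auto
    then show ?thesis by blast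
  next
    case 3
    then have "(a = p2 \<and> b = p0) \<or> (a = p0 \<and> b = p2)"
      using fc_step[OF inv i2 i3] d by auto
    then show ?thesis by blast
  qed
qed



lemma invol_swap:
  assumes i: "\<And>x. f (f x) = x" and e: "f x = y" shows "x = f y"
proof -
  have "x = f (f x)" by (simp add: i)
  also have "\<dots> = f y" using e by simp
  finally show ?thesis .
qed

lemma off_cycle:
  fixes s1 :: "nat \<Rightarrow> nat"
  assumes inv: "\<And>x. s1 (s1 x) = x"
    and ab: "a \<in> {p0,p1,p2,p3}" "b \<in> {p0,p1,p2,p3}"
    and c0: "transpose a b (s1 p0) = p1" and c1: "transpose a b (s1 p1) = p2"
    and c2: "transpose a b (s1 p2) = p3" and c3: "transpose a b (s1 p3) = p0"
    and z: "z \<notin> {p0,p1,p2,p3}"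
  shows "transpose a b (s1 (transpose a b (s1 z))) = z"
proof -
  have inj: "\<And>x y. transpose a b (s1 x) = transpose a b (s1 y) \<Longrightarrow> x = y"
  proof -
    fix x y assume e: "transpose a b (s1 x) = transpose a b (s1 y)"
    have "transpose a b (transpose a b (s1 x)) = transpose a b (transpose a b (s1 y))" using e by simp
    then have "s1 x = s1 y" by simp
    then have "s1 (s1 x) = s1 (s1 y)" by simp
    then show "x = y" using inv by simp
  qed
  have pre: "\<And>w. transpose a b (s1 w) \<in> {p0,p1,p2,p3} \<Longrightarrow> w \<in> {p0,p1,p2,p3}"
  proof -
    fix w assume "transpose a b (s1 w) \<in> {p0,p1,p2,p3}"
    then consider "transpose a b (s1 w) = p0" | "transpose a b (s1 w) = p1"
      | "transpose a b (s1 w) = p2" | "transpose a b (s1 w) = p3" by blast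
    then show "w \<in> {p0,p1,p2,p3}"
    proof cases
      case 1 have "w = p3" by (rule inj) (use 1 c3 in simp)
      then show ?thesis by simp
    next
      case 2 have "w = p0" by (rule inj) (use 2 c0 in simp)
      then show ?thesis by simp
    next
      case 3 have "w = p1" by (rule inj) (use 3 c1 in simp)
      then show ?thesis by simp
    next
      case 4 have "w = p2" by (rule inj) (use 4 c2 in simp)
      then show ?thesis by simp
    qed
  qed
  have "s1 z \<noteq> a"
  proof
    assume "s1 z = a"
    then have "transpose a b (s1 z) = b" by simp
    then have "transpose a b (s1 z) \<in> {p0,p1,p2,p3}" using ab by simp
    then have "z \<in> {p0,p1,p2,p3}" by (rule pre)
    then show False using z by simp
  qed
  moreover have "s1 z \<noteq> b"
  proof
    assume "s1 z = b"
    then have "transpose a b (s1 z) = a" by simp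
    then have "transpose a b (s1 z) \<in> {p0,p1,p2,p3}" using ab by simp
    then have "z \<in> {p0,p1,p2,p3}" by (rule pre)
    then show False using z by simp
  qed
  ultimately have "transpose a b (s1 z) = s1 z" by simp
  moreover have "z \<noteq> a" "z \<noteq> b" using z ab by auto
  ultimately show ?thesis using inv by simp
qed

lemma rot_small:
  assumes "p \<in> {1..2*n}" "i \<le> 2*n"
  shows "rot n i p = (if p + i \<le> 2*n then p + i else p + i - 2*n)"
proof (cases "p + i \<le> 2*n")
  case True
  then have "(p - 1 + i) mod (2*n) = p - 1 + i" using assms by simp
  then show ?thesis using assms True unfolding rot_def by simp
next
  case False
  then have e: "p - 1 + i = (p + i - 2*n - 1) + 1 * (2*n)" using assms by auto
  have "(p - 1 + i) mod (2*n) = (p + i - 2*n - 1) mod (2*n)" unfolding e by (rule mod_mult_self1)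
  also have "\<dots> = p + i - 2*n - 1" using assms False by simp
  finally show ?thesis using assms False unfolding rot_def by simp
qed

lemma rot_plus2n: "rot n (2*n + k) = rot n k"
proof -
  have "rot n (2*n + k) = rot n ((2*n + k) mod (2*n))" by (simp only: rot_mod)
  also have "\<dots> = rot n (k mod (2*n))" by simp
  also have "\<dots> = rot n k" by (simp only: rot_mod)
  finally show ?thesis .
qed

lemma rot_back: "rot n (2*n - 1) (rot n (Suc k) p) = rot n k p"
proof -
  have "rot n (2*n - 1) (rot n (Suc k) p) = rot n (2*n - 1 + Suc k) p" by (simp only: rot_add)
  also have "\<dots> = rot n (2*n + k) p"
  proof (cases "n = 0")
    case True then show ?thesis by (simp add: rot_n0)
  next
    case False then have "2*n - 1 + Suc k = 2*n + k" by simp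
    then show ?thesis by simp
  qed
  also have "\<dots> = rot n k p" by (simp only: rot_plus2n)
  finally show ?thesis .
qed

lemma block:
  fixes s0 :: "nat \<Rightarrow> nat" and C :: "nat set"
  assumes inv: "\<And>x. s0 (s0 x) = x"
    and fpf: "\<And>x. x \<in> {1..2*n} \<Longrightarrow> s0 x \<noteq> x"
    and uu: "\<And>z. z \<in> {1..2*n} \<Longrightarrow> z \<notin> C \<Longrightarrow> s0 (rot n 1 (s0 (rot n 1 z))) = z"
    and p: "p \<in> {1..2*n}" and start: "s0 (rot n 1 p) = rot n m p"
    and notC: "\<And>i. 1 \<le> i \<Longrightarrow> i < m \<Longrightarrow> rot n i p \<notin> C"
  shows "\<And>i. 1 \<le> i \<Longrightarrow> i \<le> m \<Longrightarrow> s0 (rot n i p) = rot n (m + 1 - i) p"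
    and "even m"
proof -
  have half: "\<And>j. 1 + j \<le> m - j \<Longrightarrow> s0 (rot n (1+j) p) = rot n (m-j) p"
  proof -
    fix j show "1 + j \<le> m - j \<Longrightarrow> s0 (rot n (1+j) p) = rot n (m-j) p"
    proof (induction j)
      case 0 then show ?case using start by simp
    next
      case (Suc j)
      then have ih: "s0 (rot n (1+j) p) = rot n (m-j) p" by simp
      let ?z = "rot n (1+j) p"
      have zD: "?z \<in> {1..2*n}" using p by (rule rot_in)
      have zC: "?z \<notin> C" using notC Suc.prems by simp
      have r1: "rot n 1 ?z = rot n (1 + Suc j) p" by (simp add: rot_add)
      define w where "w = s0 (rot n (1 + Suc j) p)"
      have "s0 (rot n 1 w) = ?z" using uu[OF zD zC] unfolding r1 w_def .
      then have "rot n 1 w = s0 ?z" by (rule invol_swap[OF inv])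
      then have e1: "rot n 1 w = rot n (Suc (m - Suc j)) p" using ih Suc.prems
        by (simp add: Suc_diff_Suc)
      have "rot n (2*n-1) (rot n 1 w) = rot n (2*n-1) (rot n (Suc (m - Suc j)) p)" by (simp only: e1)
      also have "\<dots> = rot n (m - Suc j) p" by (rule rot_back)
      finally have "rot n (2*n-1) (rot n 1 w) = rot n (m - Suc j) p" .
      moreover have "rot n (2*n-1) (rot n 1 w) = w" using rot_back[of n 0 w] by (simp add: rot_0)
      ultimately show ?case unfolding w_def by simp
    qed
  qed
  show full: "\<And>i. 1 \<le> i \<Longrightarrow> i \<le> m \<Longrightarrow> s0 (rot n i p) = rot n (m + 1 - i) p"
  proof -
    fix i assume i: "1 \<le> i" "i \<le> m"
    show "s0 (rot n i p) = rot n (m + 1 - i) p"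
    proof (cases "i \<le> m + 1 - i")
      case True
      have "s0 (rot n (1 + (i - 1)) p) = rot n (m - (i - 1)) p" by (rule half) (use True i in simp)
      moreover have "1 + (i - 1) = i" "m - (i - 1) = m + 1 - i" using i by auto
      ultimately show ?thesis by simp
    next
      case False
      have "s0 (rot n (1 + (m - i)) p) = rot n (m - (m - i)) p" by (rule half) (use False i in simp)
      moreover have "m - (m - i) = i" "1 + (m - i) = m + 1 - i" using i by auto
      ultimately have "s0 (rot n (m + 1 - i) p) = rot n i p" by simp
      then have "rot n (m + 1 - i) p = s0 (rot n i p)" by (rule invol_swap[OF inv])
      then show ?thesis by simp
    qed
  qed
  show "even m"
  proof (rule ccontr)
    assume "odd m"
    then obtain j where j: "m = 2*j + 1" using oddE by blast
    have "s0 (rot n (1 + j) p) = rot n (m - j) p" by (rule half) (use j in simp)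
    moreover have "m - j = 1 + j" using j by simp
    ultimately have "s0 (rot n (1 + j) p) = rot n (1 + j) p" by simp
    moreover have "rot n (1 + j) p \<in> {1..2*n}" using p by (rule rot_in)
    ultimately show False using fpf by blast
  qed
qed

lemma rot_fix_free: "x \<in> {1..2*n} \<Longrightarrow> rot n n x \<noteq> x"
  using rot_small[of x n n] by auto

lemma rot_nn: "rot n n (rot n n x) = x"
  by (simp add: rot_add flip: mult_2) (simp add: rot_2n)

lemma comm_transp_swap:
  fixes R :: "nat \<Rightarrow> nat"
  assumes RR: "inj R" and c: "\<And>x. R (transpose a b x) = transpose a b (R x)"
    and fa: "R a \<noteq> a" and ab: "a \<noteq> b"
  shows "R a = b"
proof (rule ccontr)
  assume "R a \<noteq> b"
  then have "transpose a b (R a) = R a" using fa by simp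
  then have "R b = R a" using c[of a] by simp
  then have "b = a" using RR by (simp add: inj_eq)
  then show False using ab by simp
qed

lemma swap_comm_transp:
  fixes R :: "nat \<Rightarrow> nat"
  assumes RR: "\<And>x. R (R x) = x" and ra: "R a = b" and rb: "R b = a"
  shows "R (transpose a b x) = transpose a b (R x)"
proof -
  consider "x = a" | "x = b" | "x \<noteq> a \<and> x \<noteq> b" by blast
  then show ?thesis
  proof cases
    case 3
    have "R x \<noteq> a"
    proof
      assume "R x = a" then have "x = R a" by (rule invol_swap[OF RR])
      then show False using 3 ra by simp
    qed
    moreover have "R x \<noteq> b"
    proof
      assume "R x = b" then have "x = R b" by (rule invol_swap[OF RR])
      then show False using 3 rb by simp
    qed
    ultimately show ?thesis using 3 by simp
  qed (use ra rb in auto)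
qed



lemma rot_plus2n': "rot n (k + 2*n) = rot n k"
  using rot_plus2n[of n k] by (simp add: add.commute)

lemma rot_fix:
  assumes a: "a \<in> {1..2*n}" and f: "rot n e a = a"
  shows "rot n e = id"
proof
  fix x show "rot n e x = id x"
  proof (cases "x \<in> {1..2*n}")
    case True
    define k where "k = (if a \<le> x then x - a else x + 2*n - a)"
    have "k \<le> 2*n" using True a unfolding k_def by auto
    then have "rot n k a = x" using rot_small[OF a, of k] True a unfolding k_def by auto
    then have "rot n e x = rot n e (rot n k a)" by simp
    also have "\<dots> = rot n k (rot n e a)" by (simp add: rot_add add.commute)
    also have "\<dots> = x" using f \<open>rot n k a = x\<close> by simp
    finally show ?thesis by simp
  qed (simp add: rot_out)
qed

lemma rot_invol:
  assumes n: "n > 0" and f: "rot n j (rot n j (2*n)) = 2*n"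
  shows "rot n j = id \<or> rot n j = rot n n"
proof -
  define e where "e = j mod (2*n)"
  have r: "rot n j = rot n e" unfolding e_def by (simp add: rot_mod)
  have el: "e < 2*n" unfolding e_def using n by simp
  show ?thesis
  proof (cases "e = 0")
    case True then show ?thesis using r by (simp add: rot_0)
  next
    case False
    then have eD: "e \<in> {1..2*n}" using el by auto
    have "rot n e (2*n) = e" by (rule rot_top[OF eD])
    then have "rot n e e = 2*n" using f r by simp
    then have "e = n" using rot_small[OF eD, of e] el by (auto split: if_splits)
    then show ?thesis using r by simp
  qed
qed

lemma rot_delta_c:
  assumes c: "c \<in> {1..2*n}" and c': "c' \<in> {1..2*n}"
  shows "rot n (c' + (2*n - c)) c = c'"
proof -
  have "rot n (2*n - c) c = 2*n" using rot_small[OF c, of "2*n - c"] c by auto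
  then have "rot n (c' + (2*n - c)) c = rot n c' (2*n)" by (simp flip: rot_add)
  also have "\<dots> = c'" by (rule rot_top[OF c'])
  finally show ?thesis .
qed

lemma conj_rot_eq:
  assumes c: "c \<in> {1..2*n}" and c': "c' \<in> {1..2*n}"
  shows "(inv (rot n c) \<circ> \<sigma> \<circ> rot n c = inv (rot n c') \<circ> \<sigma> \<circ> rot n c')
     \<longleftrightarrow> (rot n (c' + (2*n - c)) \<circ> \<sigma> = \<sigma> \<circ> rot n (c' + (2*n - c)))"
proof -
  have ic: "inv (rot n c) = rot n (2*n - c)" using c by (simp add: rot_inv)
  have ic': "inv (rot n c') = rot n (2*n - c')" using c' by (simp add: rot_inv)
  let ?d = "c' + (2*n - c)"
  have a1: "\<And>y. rot n c (rot n (2*n - c) y) = y" using c by (simp add: rot_add rot_2n)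
  have a2: "\<And>y. rot n (2*n - c') (rot n c' y) = y" using c' by (simp add: rot_add rot_2n)
  have a3: "\<And>y. rot n c' (rot n (2*n - c') y) = y" using c' by (simp add: rot_add rot_2n)
  have a4: "\<And>y. rot n ?d (rot n c y) = rot n c' y"
  proof -
    fix y have "?d + c = 2*n + c'" using c by auto
    then show "rot n ?d (rot n c y) = rot n c' y" by (simp add: rot_add rot_plus2n rot_plus2n')
  qed
  have a5: "\<And>y. rot n (2*n - c') (rot n ?d y) = rot n (2*n - c) y"
  proof -
    fix y have "2*n - c' + ?d = 2*n + (2*n - c)" using c c' by auto
    then show "rot n (2*n - c') (rot n ?d y) = rot n (2*n - c) y" by (simp add: rot_add rot_plus2n rot_plus2n')
  qed
  have a6: "\<And>y. rot n c' (rot n (2*n - c) y) = rot n ?d y" by (simp add: rot_add)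
  show ?thesis unfolding ic ic'
  proof
    assume h: "rot n (2*n - c) \<circ> \<sigma> \<circ> rot n c = rot n (2*n - c') \<circ> \<sigma> \<circ> rot n c'"
    show "rot n ?d \<circ> \<sigma> = \<sigma> \<circ> rot n ?d"
    proof
      fix y
      have "rot n (2*n - c) (\<sigma> (rot n c (rot n (2*n - c) y))) = rot n (2*n - c') (\<sigma> (rot n c' (rot n (2*n - c) y)))"
        using h by (metis comp_apply)
      then have "rot n (2*n - c) (\<sigma> y) = rot n (2*n - c') (\<sigma> (rot n ?d y))" by (simp only: a1 a6)
      then have "rot n c' (rot n (2*n - c) (\<sigma> y)) = rot n c' (rot n (2*n - c') (\<sigma> (rot n ?d y)))" by simp
      then show "(rot n ?d \<circ> \<sigma>) y = (\<sigma> \<circ> rot n ?d) y" by (simp only: a6 a3 comp_apply)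
    qed
  next
    assume h: "rot n ?d \<circ> \<sigma> = \<sigma> \<circ> rot n ?d"
    show "rot n (2*n - c) \<circ> \<sigma> \<circ> rot n c = rot n (2*n - c') \<circ> \<sigma> \<circ> rot n c'"
    proof
      fix x
      have "\<sigma> (rot n c' x) = \<sigma> (rot n ?d (rot n c x))" by (simp only: a4)
      also have "\<dots> = rot n ?d (\<sigma> (rot n c x))" using h by (metis comp_apply)
      finally have "rot n (2*n - c') (\<sigma> (rot n c' x)) = rot n (2*n - c') (rot n ?d (\<sigma> (rot n c x)))" by simp
      also have "\<dots> = rot n (2*n - c) (\<sigma> (rot n c x))" by (rule a5)
      finally show "(rot n (2*n - c) \<circ> \<sigma> \<circ> rot n c) x = (rot n (2*n - c') \<circ> \<sigma> \<circ> rot n c') x" by simp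
    qed
  qed
qed

lemma delta_cases:
  assumes n: "n > 0" and c: "c \<in> {1..2*n}" and c': "c' \<in> {1..2*n}"
    and a: "a \<in> {1..2*n}" and b: "b \<in> {1..2*n}" and ab: "a \<noteq> b"
    and cm: "rot n (c' + (2*n - c)) \<circ> transpose a b = transpose a b \<circ> rot n (c' + (2*n - c))"
  shows "c' = c \<or> rot n (c' + (2*n - c)) = rot n n"
proof -
  let ?d = "rot n (c' + (2*n - c))"
  have dc: "?d c = c'" by (rule rot_delta_c[OF c c'])
  have injd: "inj ?d" using rot_permutes permutes_inj by blast
  have cmp: "\<And>x. ?d (transpose a b x) = transpose a b (?d x)" using cm by (metis comp_apply)
  show ?thesis
  proof (cases "?d a = a")
    case True
    then have "?d = id" by (rule rot_fix[OF a])
    then show ?thesis using dc by simp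
  next
    case False
    have da: "?d a = b" by (rule comm_transp_swap[OF injd cmp False ab])
    have db': "?d b \<noteq> b"
    proof
      assume "?d b = b"
      then have "?d = id" by (rule rot_fix[OF b])
      then show False using da ab by simp
    qed
    have cmp': "\<And>x. ?d (transpose b a x) = transpose b a (?d x)" using cmp by (simp add: transpose_commute)
    have db: "?d b = a" by (rule comm_transp_swap[OF injd cmp' db']) (use ab in simp)
    have "rot n ((c' + (2*n - c)) + (c' + (2*n - c))) a = a" using da db by (simp flip: rot_add)
    then have "rot n ((c' + (2*n - c)) + (c' + (2*n - c))) = id" by (rule rot_fix[OF a])
    then have "?d (?d (2*n)) = 2*n" by (metis id_apply rot_add)
    then have "?d = id \<or> ?d = rot n n" by (rule rot_invol[OF n])
    then show ?thesis using da ab by auto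
  qed
qed



theorem proposition8:
  fixes n h k1 k2 :: nat and s0 sinf s1 t :: "nat \<Rightarrow> nat"
  assumes "special n (s0, sinf, s1, t)"
    and "h < k1" and "k1 < k2" and "k2 < 2*n - h"
    and "t (s1 (2*n - h)) = h" and "t (s1 h) = k1"
    and "t (s1 k1) = k2" and "t (s1 k2) = 2*n - h"
  shows "card {\<Sigma> \<in> conj_class n (s0, sinf, s1, t). special n \<Sigma>}
           = (if even n \<and> k1 = n - h \<and> k2 = n + h then 2 else 4)"
proof -
  note sp = assms(1)
  have spc: "admissible n (s0, sinf, s1, t) \<and> sinf = std_cycle n \<and> s1 (2*n) = 2*n \<and> t (2*n) = 2*n"
    using sp unfolding special_def prod.case by blast
  then have ad: "admissible n (s0, sinf, s1, t)" and sinf: "sinf = std_cycle n"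
    and s1top: "s1 (2*n) = 2*n" and ttop: "t (2*n) = 2*n" by blast+
  have P0: "prod_disj_transp n n s0" and P1: "prod_disj_transp n (n-2) s1"
    and T: "is_transp n t" and prod: "t \<circ> s1 \<circ> sinf \<circ> s0 = id"
    using ad unfolding admissible_def by simp_all
  obtain a b where a: "a \<in> {1..2*n}" and b: "b \<in> {1..2*n}" and ab: "a \<noteq> b"
    and tab: "t = transpose a b"
    using T unfolding is_transp_def by blast
  have s0perm: "s0 permutes {1..2*n}" and s0ii: "s0 \<circ> s0 = id"
    and s0card: "card {x \<in> {1..2*n}. s0 x \<noteq> x} = 2 * n"
    using P0 unfolding prod_disj_transp_def by simp_all
  have s1perm: "s1 permutes {1..2*n}" and s1ii: "s1 \<circ> s1 = id"
    and s1card: "card {x \<in> {1..2*n}. s1 x \<noteq> x} = 2 * (n - 2)"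
    using P1 unfolding prod_disj_transp_def by simp_all
  have s0inv: "\<And>x. s0 (s0 x) = x" using s0ii by (metis comp_apply id_apply)
  have s1inv: "\<And>x. s1 (s1 x) = x" using s1ii by (metis comp_apply id_apply)
  have prodp: "\<And>y. t (s1 (sinf (s0 y))) = y" using prod by (metis comp_apply id_apply)
  have hpos: "h \<noteq> 0"
  proof
    assume "h = 0"
    then have "t (s1 (2*n)) = 0" using assms(5) by simp
    then have "2*n = (0::nat)" using s1top ttop by simp
    then show False using assms(2-4) by simp
  qed
  have bnd: "2*h + 2 < 2*n" using assms(2-4) hpos by linarith
  have n0: "n > 0" using bnd by simp
  have u: "\<And>x. t (s1 x) = s0 (rot n 1 x)"
  proof -
    fix x
    define y where "y = s0 (rot n 1 x)"
    have "s0 y = rot n 1 x" unfolding y_def by (simp add: s0inv)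
    moreover have "sinf (rot n 1 x) = x"
      using rot_back[of n 0 x] unfolding sinf std_rot[OF n0] by (simp add: rot_0)
    ultimately have "t (s1 (sinf (s0 y))) = t (s1 x)" by simp
    then show "t (s1 x) = s0 (rot n 1 x)" using prodp unfolding y_def by simp
  qed
  have dist: "distinct [2*n-h, h, k1, k2]" using assms(2-4) by auto
  have inD: "2*n-h \<in> {1..2*n}" "h \<in> {1..2*n}" "k1 \<in> {1..2*n}" "k2 \<in> {1..2*n}"
    using assms(2-4) hpos by auto
  have c0: "transpose a b (s1 (2*n-h)) = h" using assms(5) tab by simp
  have c1: "transpose a b (s1 h) = k1" using assms(6) tab by simp
  have c2: "transpose a b (s1 k1) = k2" using assms(7) tab by simp
  have c3: "transpose a b (s1 k2) = 2*n-h" using assms(8) tab by simp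
  have opp: "(a = 2*n-h \<and> b = k1) \<or> (a = k1 \<and> b = 2*n-h) \<or> (a = h \<and> b = k2) \<or> (a = k2 \<and> b = h)"
    by (rule four_cycle[OF s1inv ab dist c0 c1 c2 c3])
  have abC: "a \<in> {2*n-h, h, k1, k2}" "b \<in> {2*n-h, h, k1, k2}" using opp by auto
  have uu: "\<And>z. z \<in> {1..2*n} \<Longrightarrow> z \<notin> {2*n-h, h, k1, k2} \<Longrightarrow> s0 (rot n 1 (s0 (rot n 1 z))) = z"
  proof -
    fix z assume z: "z \<notin> {2*n-h, h, k1, k2}"
    have "transpose a b (s1 (transpose a b (s1 z))) = z" by (rule off_cycle[OF s1inv abC c0 c1 c2 c3 z])
    then have "t (s1 (t (s1 z))) = z" using tab by simp
    then show "s0 (rot n 1 (s0 (rot n 1 z))) = z" by (simp only: u)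
  qed
  have s0fpf: "\<And>x. x \<in> {1..2*n} \<Longrightarrow> s0 x \<noteq> x"
  proof -
    have sub: "{x\<in>{1..2*n}. s0 x \<noteq> x} \<subseteq> {1..2*n}" by blast
    have cc: "card {x\<in>{1..2*n}. s0 x \<noteq> x} = card {1..2*n}" using s0card by simp
    have "{x\<in>{1..2*n}. s0 x \<noteq> x} = {1..2*n}"
      by (rule card_subset_eq[OF finite_atLeastAtMost sub cc])
    then show "\<And>x. x \<in> {1..2*n} \<Longrightarrow> s0 x \<noteq> x" by blast
  qed
  have i0: "s1 (2*n-h) = transpose a b h" using c0 by (metis transpose_involutory)
  have i1: "s1 h = transpose a b k1" using c1 by (metis transpose_involutory)
  have i2: "s1 k1 = transpose a b k2" using c2 by (metis transpose_involutory)
  have i3: "s1 k2 = transpose a b (2*n-h)" using c3 by (metis transpose_involutory)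
  have s1a: "s1 a \<noteq> a" and s1b: "s1 b \<noteq> b"
    using opp i0 i1 i2 i3 dist by auto
  define F where "F = {x \<in> {1..2*n}. s1 x = x \<and> t x = x}"
  have F': "F = {1..2*n} - {x \<in> {1..2*n}. s1 x \<noteq> x}"
    unfolding F_def using s1a s1b tab by (auto simp: transpose_def)
  have n2: "n \<ge> 2" using bnd by simp
  have Fcard: "card F = 4"
  proof -
    have "card F = card {1..2*n} - card {x \<in> {1..2*n}. s1 x \<noteq> x}"
      unfolding F' by (rule card_Diff_subset) auto
    also have "\<dots> = 4" using s1card n2 by simp
    finally show ?thesis .
  qed
  have topF: "2*n \<in> F" unfolding F_def using s1top ttop n0 by simp
  define g where "g c = conj4 (rot n c) (s0, sinf, s1, t)" for c
  have cj: "\<And>\<gamma>. conj4 \<gamma> (s0,sinf,s1,t) = (inv \<gamma>\<circ>s0\<circ>\<gamma>, inv \<gamma>\<circ>sinf\<circ>\<gamma>, inv \<gamma>\<circ>s1\<circ>\<gamma>, inv \<gamma>\<circ>t\<circ>\<gamma>)"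
    unfolding conj4_def by simp
  have Seq: "{\<Sigma> \<in> conj_class n (s0, sinf, s1, t). special n \<Sigma>} = g ` F"
  proof
    show "{\<Sigma> \<in> conj_class n (s0, sinf, s1, t). special n \<Sigma>} \<subseteq> g ` F"
    proof
      fix S assume "S \<in> {\<Sigma> \<in> conj_class n (s0, sinf, s1, t). special n \<Sigma>}"
      then obtain \<gamma> where gp: "\<gamma> permutes {1..2*n}" and Sg: "S = conj4 \<gamma> (s0,sinf,s1,t)"
        and spS: "special n S" unfolding conj_class_def by blast
      have "admissible n S \<and> inv \<gamma>\<circ>sinf\<circ>\<gamma> = std_cycle n \<and> (inv \<gamma>\<circ>s1\<circ>\<gamma>) (2*n) = 2*n \<and> (inv \<gamma>\<circ>t\<circ>\<gamma>) (2*n) = 2*n"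
        using spS unfolding Sg cj special_def prod.case by blast
      then have e1: "inv \<gamma>\<circ>sinf\<circ>\<gamma> = std_cycle n" and e2: "(inv \<gamma>\<circ>s1\<circ>\<gamma>) (2*n) = 2*n"
        and e3: "(inv \<gamma>\<circ>t\<circ>\<gamma>) (2*n) = 2*n" by blast+
      have cm: "\<gamma> \<circ> std_cycle n = std_cycle n \<circ> \<gamma>"
      proof
        fix x
        have "(inv \<gamma>\<circ>sinf\<circ>\<gamma>) x = std_cycle n x" using e1 by simp
        then have "sinf (\<gamma> x) = \<gamma> (std_cycle n x)" by (simp only: conj_apply[OF gp])
        then show "(\<gamma> \<circ> std_cycle n) x = (std_cycle n \<circ> \<gamma>) x" using sinf by simp
      qed
      have geq: "\<gamma> = rot n (\<gamma> (2*n))" by (rule comm_std_rot[OF gp n0 cm])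
      have "2*n \<in> {1..2*n}" using n0 by simp
      then have cD: "\<gamma> (2*n) \<in> {1..2*n}" using permutes_in_image[OF gp] by blast
      have "s1 (\<gamma> (2*n)) = \<gamma> (2*n)" using e2 by (simp only: conj_apply[OF gp])
      moreover have "t (\<gamma> (2*n)) = \<gamma> (2*n)" using e3 by (simp only: conj_apply[OF gp])
      ultimately have "\<gamma> (2*n) \<in> F" unfolding F_def using cD by simp
      moreover have "S = g (\<gamma> (2*n))" unfolding g_def Sg using geq by simp
      ultimately show "S \<in> g ` F" by blast
    qed
    show "g ` F \<subseteq> {\<Sigma> \<in> conj_class n (s0, sinf, s1, t). special n \<Sigma>}"
    proof
      fix S assume "S \<in> g ` F"
      then obtain c where c: "c \<in> F" and Sc: "S = g c" by blast
      have cc: "c \<in> {1..2*n}" "s1 c = c" "t c = c" using c unfolding F_def by simp_all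
      have "S \<in> conj_class n (s0, sinf, s1, t)" unfolding Sc g_def conj_class_def
        using rot_permutes by blast
      moreover have "special n S" unfolding Sc g_def by (rule special_conj_rot[OF sp cc])
      ultimately show "S \<in> {\<Sigma> \<in> conj_class n (s0, sinf, s1, t). special n \<Sigma>}" by blast
    qed
  qed
  define R where "R = rot n n"
  define Cent where "Cent \<longleftrightarrow> R \<circ> s0 = s0 \<circ> R \<and> R \<circ> s1 = s1 \<circ> R \<and> R \<circ> t = t \<circ> R"
  have stdcomm: "\<And>j. rot n j \<circ> sinf = sinf \<circ> rot n j"
    unfolding sinf std_rot[OF n0] by (rule rot_comm)
  have gchar: "\<And>c c'. c \<in> F \<Longrightarrow> c' \<in> F \<Longrightarrow> g c = g c' \<longleftrightarrow> (c' = c \<or> (c' = R c \<and> Cent))"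
  proof -
    fix c c' assume cF: "c \<in> F" and c'F: "c' \<in> F"
    have cD: "c \<in> {1..2*n}" and c'D: "c' \<in> {1..2*n}" using cF c'F unfolding F_def by simp_all
    define d where "d = rot n (c' + (2*n - c))"
    have giff: "g c = g c' \<longleftrightarrow> (d\<circ>s0 = s0\<circ>d \<and> d\<circ>sinf = sinf\<circ>d \<and> d\<circ>s1 = s1\<circ>d \<and> d\<circ>t = t\<circ>d)"
      unfolding g_def cj d_def prod.inject conj_rot_eq[OF cD c'D] ..
    have dR: "c' = R c \<Longrightarrow> d = R"
    proof -
      assume c': "c' = R c"
      show "d = R"
      proof (cases "c + n \<le> 2*n")
        case True
        then have "c' = c + n" using c' rot_small[OF cD, of n] unfolding R_def by simp
        then have "c' + (2*n - c) = 2*n + n" using cD by simp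
        then show ?thesis unfolding d_def R_def by (simp only: rot_plus2n)
      next
        case False
        then have "c' = c + n - 2*n" using c' rot_small[OF cD, of n] unfolding R_def by simp
        then have "c' + (2*n - c) = n" using cD False by simp
        then show ?thesis unfolding d_def R_def by simp
      qed
    qed
    show "g c = g c' \<longleftrightarrow> (c' = c \<or> (c' = R c \<and> Cent))"
    proof
      assume "g c = g c'"
      then have cm: "d\<circ>s0 = s0\<circ>d" "d\<circ>s1 = s1\<circ>d" "d\<circ>t = t\<circ>d" using giff by simp_all
      have "c' = c \<or> d = rot n n"
        unfolding d_def by (rule delta_cases[OF n0 cD c'D a b ab]) (use cm(3) tab d_def in simp)
      then show "c' = c \<or> (c' = R c \<and> Cent)"
      proof
        assume dn: "d = rot n n"
        have "d c = c'" unfolding d_def by (rule rot_delta_c[OF cD c'D])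
        then have "c' = R c" using dn R_def by simp
        moreover have Cent unfolding Cent_def using cm dn R_def by simp
        ultimately show ?thesis by blast
      qed blast
    next
      assume "c' = c \<or> (c' = R c \<and> Cent)"
      then show "g c = g c'"
      proof
        assume h: "c' = R c \<and> Cent"
        then have "d = R" using dR by blast
        then show ?thesis unfolding giff using h stdcomm unfolding Cent_def R_def by simp
      qed simp
    qed
  qed
  have card_S: "card (g ` F) = (if Cent then 2 else 4)"
  proof (cases Cent)
    case False
    have "inj_on g F" unfolding inj_on_def using gchar False by blast
    then have "card (g ` F) = card F" by (rule card_image)
    then show ?thesis using False Fcard by simp
  next
    case True
    have Rs1: "\<And>x. R (s1 x) = s1 (R x)" and Rt: "\<And>x. R (t x) = t (R x)"
      using True unfolding Cent_def by (metis comp_apply)+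
    have RF: "\<And>x. x \<in> F \<Longrightarrow> R x \<in> F"
    proof -
      fix x assume "x \<in> F"
      then have "x \<in> {1..2*n}" "s1 x = x" "t x = x" unfolding F_def by simp_all
      then show "R x \<in> F" unfolding F_def using Rs1[of x] Rt[of x] rot_in[of x n] R_def by simp
    qed
    have RR: "\<And>x. R (R x) = x" unfolding R_def by (rule rot_nn)
    have RD: "\<And>x. x \<in> {1..2*n} \<Longrightarrow> R x \<noteq> x" unfolding R_def by (rule rot_fix_free)
    have topD: "2*n \<in> {1..2*n}" using n0 by simp
    have top2: "R (2*n) \<in> F" by (rule RF[OF topF])
    have ne: "R (2*n) \<noteq> 2*n" by (rule RD[OF topD])
    have "card (F - {2*n, R (2*n)}) = 2" using Fcard topF top2 ne by (simp add: card_Diff_subset)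
    then have "F - {2*n, R (2*n)} \<noteq> {}" by (intro notI) simp
    then obtain x where "x \<in> F - {2*n, R (2*n)}" by blast
    then have xF: "x \<in> F" and x1: "x \<noteq> 2*n" and x2: "x \<noteq> R (2*n)" by simp_all
    have xD: "x \<in> {1..2*n}" using xF unfolding F_def by simp
    have RxF: "R x \<in> F" by (rule RF[OF xF])
    have r1: "R x \<noteq> x" by (rule RD[OF xD])
    have r2: "R x \<noteq> 2*n"
    proof
      assume "R x = 2*n" then have "R (R x) = R (2*n)" by simp
      then show False using x2 RR by simp
    qed
    have r3: "R x \<noteq> R (2*n)"
    proof
      assume "R x = R (2*n)" then have "R (R x) = R (R (2*n))" by simp
      then show False using x1 RR by simp
    qed
    have Feq: "F = {2*n, R (2*n), x, R x}"
    proof -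
      have sub: "{2*n, R (2*n), x, R x} \<subseteq> F" using topF top2 xF RxF by simp
      have "card {2*n, R (2*n), x, R x} = 4" using ne x1 x2 r1 r2 r3 by simp
      then have "card {2*n, R (2*n), x, R x} = card F" using Fcard by simp
      moreover have "finite F" unfolding F_def by simp
      ultimately show ?thesis using card_subset_eq[OF _ sub] by blast
    qed
    have g1: "g (R (2*n)) = g (2*n)" using gchar[OF topF top2] True by simp
    have g2: "g (R x) = g x" using gchar[OF xF RxF] True by simp
    have g3: "g x \<noteq> g (2*n)" using gchar[OF topF xF] x1 x2 by simp
    have "g ` F = {g (2*n), g x}" unfolding Feq using g1 g2 by auto
    then show ?thesis using True g3 by simp
  qed
  have hn: "h + 2 \<le> n" using bnd by simp
  have RR: "\<And>x. R (R x) = x" unfolding R_def by (rule rot_nn)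
  have injR: "inj R" unfolding R_def using rot_permutes permutes_inj by blast
  have RD: "\<And>x. x \<in> {1..2*n} \<Longrightarrow> R x \<noteq> x" unfolding R_def by (rule rot_fix_free)
  have Rgen: "\<And>x. x \<in> {1..2*n} \<Longrightarrow> R x = (if x + n \<le> 2*n then x + n else x + n - 2*n)"
    unfolding R_def by (rule rot_small) simp_all
  have vD: "2*n-h \<in> {1..2*n}" "h \<in> {1..2*n}" "n-h \<in> {1..2*n}" "n+h \<in> {1..2*n}"
    using hn hpos by auto
  have Rv1: "R (2*n-h) = n-h" using Rgen[OF vD(1)] hn hpos by simp
  have Rv2: "R h = n+h" using Rgen[OF vD(2)] hn hpos by simp
  have Rv3: "R (n-h) = 2*n-h" using Rgen[OF vD(3)] hn hpos by (simp add: mult_2)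
  have Rv4: "R (n+h) = h" using Rgen[OF vD(4)] hn hpos by simp
  have r1v: "\<And>x. 1 \<le> x \<Longrightarrow> x < 2*n \<Longrightarrow> rot n 1 x = x + 1"
    using rot_small by simp
  have s0h: "s0 (h+1) = k1" using assms(6) u r1v[of h] hn hpos by simp
  have s0k1: "s0 (k1+1) = k2" using assms(7) u r1v[of k1] assms(2-4) by simp
  have s0k2: "s0 (k2+1) = 2*n-h" using assms(8) u r1v[of k2] assms(2-4) by simp
  have s0t: "s0 (2*n-h+1) = h" using assms(5) u r1v[of "2*n-h"] hn hpos by simp
  have s0inj: "\<And>x y. s0 x = s0 y \<Longrightarrow> x = y" by (metis s0inv)
  have Cent_iff: "Cent \<longleftrightarrow> even n \<and> k1 = n - h \<and> k2 = n + h"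
  proof
    assume Ct: Cent
    have Rt: "\<And>x. R (t x) = t (R x)" and Rs0: "\<And>x. R (s0 x) = s0 (R x)"
      using Ct unfolding Cent_def by (metis comp_apply)+
    have Rt1: "\<And>x. R (transpose a b x) = transpose a b (R x)" using Rt tab by simp
    have Rt2: "\<And>x. R (transpose b a x) = transpose b a (R x)" using Rt1 by (simp add: transpose_commute)
    have Rab: "R a = b" by (rule comm_transp_swap[OF injR Rt1 RD[OF a] ab])
    have Rba: "R b = a" by (rule comm_transp_swap[OF injR Rt2 RD[OF b]]) (use ab in simp)
    have k12: "k1 = n - h \<and> k2 = n + h"
    proof -
      consider "(a = 2*n-h \<and> b = k1) \<or> (a = k1 \<and> b = 2*n-h)" | "(a = h \<and> b = k2) \<or> (a = k2 \<and> b = h)"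
        using opp by blast
      then show ?thesis
      proof cases
        case 1
        then have "R (2*n-h) = k1" using Rab Rba by auto
        then have k1v: "k1 = n - h" using Rv1 by simp
        have "R (s0 (h+1)) = s0 (R (h+1))" by (rule Rs0)
        moreover have "R (h+1) = n+h+1" unfolding R_def using rot_small[of "h+1" n n] hn by simp
        ultimately have "s0 (n+h+1) = 2*n-h" using s0h k1v Rv3 by simp
        then have "s0 (n+h+1) = s0 (k2+1)" using s0k2 by simp
        then have "n+h+1 = k2+1" by (rule s0inj)
        then show ?thesis using k1v by simp
      next
        case 2
        then have "R h = k2" using Rab Rba by auto
        then have k2v: "k2 = n + h" using Rv2 by simp
        have "R (s0 (k1+1)) = s0 (R (k1+1))" by (rule Rs0)
        then have "s0 (R (k1+1)) = s0 (2*n-h+1)" using s0k1 k2v Rv4 s0t by simp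
        then have e: "R (k1+1) = 2*n-h+1" by (rule s0inj)
        have "k1 + 1 \<in> {1..2*n}" using assms(2-4) by auto
        then have "R (k1+1) = (if k1 + 1 + n \<le> 2*n then k1+1+n else k1+1+n-2*n)"
          unfolding R_def using rot_small[of "k1+1" n n] by simp
        then have "k1 = n - h" using e assms(2-4) hn by (auto split: if_splits)
        then show ?thesis using k2v by simp
      qed
    qed
    have "even (k1 - h)"
    proof (rule block(2)[OF s0inv s0fpf, where C = "{2*n-h, h, k1, k2}"])
      show "\<And>z. z \<in> {1..2*n} \<Longrightarrow> z \<notin> {2*n-h, h, k1, k2} \<Longrightarrow> s0 (rot n 1 (s0 (rot n 1 z))) = z"
        by (rule uu)
      show "h \<in> {1..2*n}" by (rule inD(2))
      show "s0 (rot n 1 h) = rot n (k1 - h) h"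
        using s0h r1v[of h] rot_small[of h n "k1-h"] hn hpos assms(2-4) by simp
      show "\<And>i. 1 \<le> i \<Longrightarrow> i < k1 - h \<Longrightarrow> rot n i h \<notin> {2*n-h, h, k1, k2}"
        using rot_small[of h n] hn hpos assms(2-4) by auto
    qed
    then have "even n" using k12 hn assms(2) by (auto simp add: even_diff_nat)
    then show "even n \<and> k1 = n - h \<and> k2 = n + h" using k12 by simp
  next
    assume cond: "even n \<and> k1 = n - h \<and> k2 = n + h"
    then have k1v: "k1 = n - h" and k2v: "k2 = n + h" by simp_all
    have h2: "2*h < n" using assms(2) k1v by simp
    have Rab2: "R a = b \<and> R b = a" using opp Rv1 Rv2 Rv3 Rv4 k1v k2v by auto
    have RtC: "\<And>x. R (t x) = t (R x)" unfolding tab by (rule swap_comm_transp[OF RR]) (use Rab2 in simp_all)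
    define blk where "blk p m \<longleftrightarrow> (\<forall>i. 1 \<le> i \<longrightarrow> i \<le> m \<longrightarrow> s0 (rot n i p) = rot n (m+1-i) p)" for p m
    have mkblk: "\<And>p m. p \<in> {1..2*n} \<Longrightarrow> s0 (rot n 1 p) = rot n m p
       \<Longrightarrow> (\<And>i. 1 \<le> i \<Longrightarrow> i < m \<Longrightarrow> rot n i p \<notin> {2*n-h, h, k1, k2}) \<Longrightarrow> blk p m"
    proof -
      fix p m assume p: "p \<in> {1..2*n}" and st: "s0 (rot n 1 p) = rot n m p"
        and nc: "\<And>i. 1 \<le> i \<Longrightarrow> i < m \<Longrightarrow> rot n i p \<notin> {2*n-h, h, k1, k2}"
      show "blk p m" unfolding blk_def
        using block(1)[OF s0inv s0fpf uu p st nc] by blast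
    qed
    have rs: "\<And>p i. p \<in> {1..2*n} \<Longrightarrow> i \<le> 2*n \<Longrightarrow> rot n i p = (if p + i \<le> 2*n then p + i else p + i - 2*n)"
      by (rule rot_small)
    have B1: "blk h (n - 2*h)"
    proof (rule mkblk[OF vD(2)])
      show "s0 (rot n 1 h) = rot n (n - 2*h) h" using s0h r1v[of h] rs[OF vD(2), of "n-2*h"] hn h2 hpos k1v by simp
      show "\<And>i. 1 \<le> i \<Longrightarrow> i < n - 2*h \<Longrightarrow> rot n i h \<notin> {2*n-h, h, k1, k2}"
        using rs[OF vD(2)] hn h2 hpos k1v k2v by auto
    qed
    have B2: "blk (n-h) (2*h)"
    proof (rule mkblk[OF vD(3)])
      show "s0 (rot n 1 (n-h)) = rot n (2*h) (n-h)" using s0k1 r1v[of "n-h"] rs[OF vD(3), of "2*h"] hn h2 hpos k1v k2v by simp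
      show "\<And>i. 1 \<le> i \<Longrightarrow> i < 2*h \<Longrightarrow> rot n i (n-h) \<notin> {2*n-h, h, k1, k2}"
        using rs[OF vD(3)] hn h2 hpos k1v k2v by auto
    qed
    have B3: "blk (n+h) (n - 2*h)"
    proof (rule mkblk[OF vD(4)])
      show "s0 (rot n 1 (n+h)) = rot n (n - 2*h) (n+h)" using s0k2 r1v[of "n+h"] rs[OF vD(4), of "n-2*h"] hn h2 hpos k1v k2v by (simp add: mult_2)
      show "\<And>i. 1 \<le> i \<Longrightarrow> i < n - 2*h \<Longrightarrow> rot n i (n+h) \<notin> {2*n-h, h, k1, k2}"
        using rs[OF vD(4)] hn h2 hpos k1v k2v by auto
    qed
    have B4: "blk (2*n-h) (2*h)"
    proof (rule mkblk[OF vD(1)])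
      show "s0 (rot n 1 (2*n-h)) = rot n (2*h) (2*n-h)" using s0t r1v[of "2*n-h"] rs[OF vD(1), of "2*h"] hn h2 hpos by simp
      show "\<And>i. 1 \<le> i \<Longrightarrow> i < 2*h \<Longrightarrow> rot n i (2*n-h) \<notin> {2*n-h, h, k1, k2}"
        using rs[OF vD(1)] hn h2 hpos k1v k2v by auto
    qed
    have Rrot: "\<And>j y. R (rot n j y) = rot n j (R y)" unfolding R_def by (simp add: rot_add add.commute)
    have pair: "\<And>p q m i. blk p m \<Longrightarrow> blk q m \<Longrightarrow> R p = q \<Longrightarrow> 1 \<le> i \<Longrightarrow> i \<le> m
        \<Longrightarrow> R (s0 (rot n i p)) = s0 (R (rot n i p))"
    proof -
      fix p q m i assume bp: "blk p m" and bq: "blk q m" and pq: "R p = q" and i: "1 \<le> i" "i \<le> m"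
      have "s0 (R (rot n i p)) = s0 (rot n i q)" using Rrot pq by simp
      also have "\<dots> = rot n (m+1-i) q" using bq i unfolding blk_def by blast
      also have "\<dots> = R (rot n (m+1-i) p)" using Rrot pq by simp
      also have "\<dots> = R (s0 (rot n i p))" using bp i unfolding blk_def by simp
      finally show "R (s0 (rot n i p)) = s0 (R (rot n i p))" by simp
    qed
    have Rs0: "\<And>x. R (s0 x) = s0 (R x)"
    proof -
      fix x show "R (s0 x) = s0 (R x)"
      proof (cases "x \<in> {1..2*n}")
        case False
        then show ?thesis using permutes_not_in[OF s0perm] rot_out unfolding R_def by simp
      next
        case True
        consider "h < x \<and> x \<le> n-h" | "n-h < x \<and> x \<le> n+h" | "n+h < x \<and> x \<le> 2*n-h"
          | "2*n-h < x" | "x \<le> h" by linarith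
        then show ?thesis
        proof cases
          case 1
          then have e: "rot n (x-h) h = x" using rs[OF vD(2), of "x-h"] True by simp
          have "R (s0 (rot n (x-h) h)) = s0 (R (rot n (x-h) h))"
            by (rule pair[OF B1 B3 Rv2]) (use 1 h2 in auto)
          then show ?thesis unfolding e .
        next
          case 2
          then have e: "rot n (x-(n-h)) (n-h) = x" using rs[OF vD(3), of "x-(n-h)"] True by simp
          have "R (s0 (rot n (x-(n-h)) (n-h))) = s0 (R (rot n (x-(n-h)) (n-h)))"
            by (rule pair[OF B2 B4 Rv3]) (use 2 h2 in auto)
          then show ?thesis unfolding e .
        next
          case 3
          then have e: "rot n (x-(n+h)) (n+h) = x" using rs[OF vD(4), of "x-(n+h)"] True by simp
          have "R (s0 (rot n (x-(n+h)) (n+h))) = s0 (R (rot n (x-(n+h)) (n+h)))"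
            by (rule pair[OF B3 B1 Rv4]) (use 3 True h2 in auto)
          then show ?thesis unfolding e .
        next
          case 4
          then have e: "rot n (x-(2*n-h)) (2*n-h) = x" using rs[OF vD(1), of "x-(2*n-h)"] True by simp
          have "R (s0 (rot n (x-(2*n-h)) (2*n-h))) = s0 (R (rot n (x-(2*n-h)) (2*n-h)))"
            by (rule pair[OF B4 B2 Rv1]) (use 4 True h2 in auto)
          then show ?thesis unfolding e .
        next
          case 5
          then have e: "rot n (x+h) (2*n-h) = x" using rs[OF vD(1), of "x+h"] True hn by simp
          have "R (s0 (rot n (x+h) (2*n-h))) = s0 (R (rot n (x+h) (2*n-h)))"
            by (rule pair[OF B4 B2 Rv1]) (use 5 True h2 in auto)
          then show ?thesis unfolding e .
        qed
      qed
    qed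
    have s1f: "\<And>x. s1 x = t (s0 (rot n 1 x))"
    proof -
      fix x have "t (t (s1 x)) = t (s0 (rot n 1 x))" using u by simp
      then show "s1 x = t (s0 (rot n 1 x))" using tab by simp
    qed
    have Rs1: "\<And>x. R (s1 x) = s1 (R x)"
    proof -
      fix x
      have "R (s1 x) = t (R (s0 (rot n 1 x)))" unfolding s1f by (rule RtC)
      also have "\<dots> = t (s0 (R (rot n 1 x)))" by (simp only: Rs0)
      also have "\<dots> = s1 (R x)" unfolding s1f by (simp only: Rrot)
      finally show "R (s1 x) = s1 (R x)" .
    qed
    show Cent unfolding Cent_def using Rs0 Rs1 RtC by (simp add: fun_eq_iff)
  qed
  show ?thesis unfolding Seq card_S Cent_iff ..
qed

end
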